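(* Let $S$ be a polygonal domain and $P\in\mathcal{F}_2[S]$. Then $P$ can be normalized to a boundary configuration by a feasible schedule within $S$ in which neither robot makes a turn, and $P$ can be normalized to a corner configuration by a feasible schedule within $S$ in which each robot makes at most one turn.
   Context: A polygonal domain is a closed region bounded by an outer simple polygon, possibly containing polygonal holes. Robots are axis-parallel unit squares: a robot at $p$ occupies $p+\boxdot$, $\boxdot=\{q:\|q\|_\infty\le1/2\}$. A configuration of two robots is a pair $(p_1,p_2)$ with $\|p_1-p_2\|_\infty\ge1$; it is in $S$ if the interior of each robot is contained in $S$; $\mathcal{F}_2[S]$ is the set of such configurations. The inner Minkowski sum is $\mathrm{inner}(S)=\{x\in S:\min_{y\in\partial S}\|y-x\|_\infty\ge 1/2\}$, where $\partial S$ is the boundary of $S$. A configuration $(p_1,p_2)\in\mathcal{F}_2[S]$ is a boundary configuration if $p_1,p_2$ both lie on the boundary of $\mathrm{inner}(S)$, and a corner configuration if both lie at vertices of $\mathrm{inner}(S)$. A trajectory over $T$ is a $1$-Lipschitz (w.r.t. $L_1$) map $m:T\to\mathbb{R}^2$ with polygonal-chain image; a turn is a point of the image where two segments of different orientations meet. A schedule $(m_1,m_2)$ is feasible within $S$ if all its configurations lie in $\mathcal{F}_2[S]$. The orderings are $\{x(p_1)\ge x(p_2)+1\}$, $\{x(p_2)\ge x(p_1)+1\}$, $\{y(p_1)\ge y(p_2)+1\}$, $\{y(p_2)\ge y(p_1)+1\}$; two configurations are commonly ordered if they lie in a common ordering. Normalizing $P$ to a boundary (resp. corner) configuration means transforming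 it, by a feasible schedule within $S$, into a boundary (resp. corner) configuration commonly ordered with $P$. *)

theory Defs
  imports "HOL-Analysis.Analysis"
begin

type_synonym pt = "real \<times> real"

definition linf :: "pt \<Rightarrow> real" where
  "linf p = max \<bar>fst p\<bar> \<bar>snd p\<bar>"

definition lone :: "pt \<Rightarrow> real" where
  "lone p = \<bar>fst p\<bar> + \<bar>snd p\<bar>"

fun polyline :: "pt list \<Rightarrow> real \<Rightarrow> pt" where
  "polyline [] = (\<lambda>_. 0)"
| "polyline [a] = linepath a a"
| "polyline [a, b] = linepath a b"
| "polyline (a # b # c # rest) = linepath a b +++ polyline (b # c # rest)"

definition simple_polygon :: "pt list \<Rightarrow> bool" where
  "simple_polygon vs \<longleftrightarrow> length vs \<ge> 3 \<and> simple_path (polyline (vs @ [hd vs]))"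

definition polygon_curve :: "pt list \<Rightarrow> pt set" where
  "polygon_curve vs = path_image (polyline (vs @ [hd vs]))"

definition polygon_region :: "pt list \<Rightarrow> pt set" where
  "polygon_region vs = polygon_curve vs \<union> inside (polygon_curve vs)"

definition polygonal_domain :: "pt set \<Rightarrow> bool" where
  "polygonal_domain S \<longleftrightarrow>
     (\<exists>outer holes.
        simple_polygon outer \<and> (\<forall>h\<in>set holes. simple_polygon h) \<and>
        (\<forall>h\<in>set holes. polygon_region h \<subseteq> inside (polygon_curve outer)) \<and>
        (\<forall>i<length holes. \<forall>j<length holes. i \<noteq> j \<longrightarrow>
            polygon_region (holes ! i) \<inter> polygon_region (holes ! j) = {}) \<and>
        S = polygon_region outer - (\<Union>h\<in>set holes. inside (polygon_curve h)))"

definition robot :: "pt \<Rightarrow> pt set" where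
  "robot p = {q. linf (q - p) \<le> 1/2}"

definition F2 :: "pt set \<Rightarrow> (pt \<times> pt) set" where
  "F2 S = {(p1, p2). linf (p1 - p2) \<ge> 1 \<and> interior (robot p1) \<subseteq> S \<and> interior (robot p2) \<subseteq> S}"

definition inner :: "pt set \<Rightarrow> pt set" where
  "inner S = {x \<in> S. \<forall>y\<in>frontier S. linf (y - x) \<ge> 1/2}"

definition is_vertex :: "pt set \<Rightarrow> pt \<Rightarrow> bool" where
  "is_vertex A x \<longleftrightarrow> x \<in> frontier A \<and>
     \<not> (\<exists>e>0. \<exists>d. d \<noteq> 0 \<and> (\<forall>y\<in>ball x e. \<forall>z\<in>ball x e. \<forall>t::real.
            z = y + t *\<^sub>R d \<longrightarrow> (y \<in> A \<longleftrightarrow> z \<in> A)))"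

definition boundary_config :: "pt set \<Rightarrow> pt \<times> pt \<Rightarrow> bool" where
  "boundary_config S P \<longleftrightarrow> P \<in> F2 S \<and>
     fst P \<in> frontier (inner S) \<and> snd P \<in> frontier (inner S)"

definition corner_config :: "pt set \<Rightarrow> pt \<times> pt \<Rightarrow> bool" where
  "corner_config S P \<longleftrightarrow> P \<in> F2 S \<and>
     is_vertex (inner S) (fst P) \<and> is_vertex (inner S) (snd P)"

definition orderings :: "(pt \<times> pt) set set" where
  "orderings = {{(p1, p2). fst p1 \<ge> fst p2 + 1}, {(p1, p2). fst p2 \<ge> fst p1 + 1},
                {(p1, p2). snd p1 \<ge> snd p2 + 1}, {(p1, p2). snd p2 \<ge> snd p1 + 1}}"

definition commonly_ordered :: "pt \<times> pt \<Rightarrow> pt \<times> pt \<Rightarrow> bool" where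
  "commonly_ordered P Q \<longleftrightarrow> (\<exists>Ord\<in>orderings. P \<in> Ord \<and> Q \<in> Ord)"

definition trajectory :: "real \<Rightarrow> (real \<Rightarrow> pt) \<Rightarrow> bool" where
  "trajectory T m \<longleftrightarrow> 0 \<le> T \<and>
     (\<forall>s\<in>{0..T}. \<forall>t\<in>{0..T}. lone (m s - m t) \<le> \<bar>s - t\<bar>) \<and>
     (\<exists>vs. vs \<noteq> [] \<and> m ` {0..T} = path_image (polyline vs))"

definition turns :: "real \<Rightarrow> (real \<Rightarrow> pt) \<Rightarrow> pt set" where
  "turns T m = {x \<in> m ` {0..T}. \<exists>a b. a \<noteq> x \<and> b \<noteq> x \<and>
       closed_segment x a \<subseteq> m ` {0..T} \<and> closed_segment x b \<subseteq> m ` {0..T} \<and>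
       fst (a - x) * snd (b - x) - snd (a - x) * fst (b - x) \<noteq> 0}"

definition feasible_schedule :: "pt set \<Rightarrow> real \<Rightarrow> (real \<Rightarrow> pt) \<Rightarrow> (real \<Rightarrow> pt) \<Rightarrow> bool" where
  "feasible_schedule S T m1 m2 \<longleftrightarrow> trajectory T m1 \<and> trajectory T m2 \<and>
     (\<forall>t\<in>{0..T}. (m1 t, m2 t) \<in> F2 S)"

definition normalizes :: "pt set \<Rightarrow> (pt \<times> pt \<Rightarrow> bool) \<Rightarrow> pt \<times> pt \<Rightarrow> real \<Rightarrow>
     (real \<Rightarrow> pt) \<Rightarrow> (real \<Rightarrow> pt) \<Rightarrow> bool" where
  "normalizes S C P T m1 m2 \<longleftrightarrow> feasible_schedule S T m1 m2 \<and>
     (m1 0, m2 0) = P \<and> C (m1 T, m2 T) \<and> commonly_ordered P (m1 T, m2 T)"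

end

theory Submission
  imports Defs
begin


lemma pd_closed_bounded:
  assumes "polygonal_domain S" shows "closed S" "bounded S"
proof -
  obtain outer holes where so: "simple_polygon outer" and sh: "\<forall>h\<in>set holes. simple_polygon h"
    and S: "S = polygon_region outer - (\<Union>h\<in>set holes. inside (polygon_curve h))"
    using assms unfolding polygonal_domain_def by (elim exE conjE) blast
  have po: "path (polyline (outer @ [hd outer]))" using so simple_path_imp_path unfolding simple_polygon_def by blast
  have c1: "closed (polygon_region outer)"
    unfolding polygon_region_def polygon_curve_def using closed_path_image_Un_inside[OF po] .
  have b1: "bounded (polygon_region outer)"
    unfolding polygon_region_def polygon_curve_def
    by (simp add: bounded_inside bounded_path_image po)
  have "open (inside (polygon_curve h))" if "h \<in> set holes" for h
  proof -
    have "path (polyline (h @ [hd h]))" using sh that simple_path_imp_path unfolding simple_polygon_def by blast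
    then show ?thesis unfolding polygon_curve_def by (intro open_inside closed_path_image)
  qed
  then have "open (\<Union>h\<in>set holes. inside (polygon_curve h))" by (simp add: open_UN)
  then show "closed S" unfolding S using c1 by (intro closed_Diff)
  show "bounded S" unfolding S using b1 by (meson Diff_subset bounded_subset)
qed

lemma linf_cont: "continuous_on UNIV linf"
  unfolding linf_def by (intro continuous_intros)

lemma inner_closed: assumes "closed S" shows "closed (inner S)"
proof -
  have "inner S = S \<inter> (\<Inter>y\<in>frontier S. {x. 1/2 \<le> linf (y - x)})"
    unfolding inner_def by auto
  moreover have "closed {x. 1/2 \<le> linf (y - x)}" for y
    unfolding linf_def by (intro closed_Collect_le continuous_intros)
  ultimately show ?thesis using assms by (simp add: closed_INT closed_Int)
qed

lemma inner_sub: "inner S \<subseteq> S" unfolding inner_def by auto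

lemma linf_le: "linf v \<le> r \<longleftrightarrow> \<bar>fst v\<bar> \<le> r \<and> \<bar>snd v\<bar> \<le> r"
  unfolding linf_def by simp
lemma linf_less: "linf v < r \<longleftrightarrow> \<bar>fst v\<bar> < r \<and> \<bar>snd v\<bar> < r"
  unfolding linf_def by simp

lemma interior_robot: "interior (robot p) = {q. linf (q - p) < 1/2}"
proof -
  have "robot p = {fst p - 1/2..fst p + 1/2} \<times> {snd p - 1/2..snd p + 1/2}"
    unfolding robot_def by (auto simp: linf_le abs_le_iff simp del: divide_const_simps)
  then have "interior (robot p) = {fst p - 1/2<..<fst p + 1/2} \<times> {snd p - 1/2<..<snd p + 1/2}"
    by (simp add: interior_Times)
  also have "\<dots> = {q. linf (q - p) < 1/2}"
    by (auto simp: linf_less abs_less_iff simp del: divide_const_simps)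
  finally show ?thesis .
qed

lemma linf_nonneg: "0 \<le> linf v" unfolding linf_def by simp
lemma linf_scale: "0 \<le> u \<Longrightarrow> linf (u *\<^sub>R v) = u * linf v"
  unfolding linf_def by (simp add: abs_mult max_mult_distrib_left)
lemma linf_seg: assumes "y \<in> closed_segment p q" shows "linf (y - p) \<le> linf (q - p)"
proof -
  obtain u where u: "0 \<le> u" "u \<le> 1" "y = (1 - u) *\<^sub>R p + u *\<^sub>R q"
    using assms unfolding closed_segment_def by blast
  then have "y - p = u *\<^sub>R (q - p)" by (simp add: algebra_simps)
  then have "linf (y - p) = u * linf (q - p)"
    using u linf_scale by simp
  then show ?thesis using u linf_nonneg[of "q-p"]
    by (simp add: mult_left_le_one_le)
qed

lemma robot_inner: "interior (robot p) \<subseteq> S \<longleftrightarrow> p \<in> inner S"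
proof
  assume a: "interior (robot p) \<subseteq> S"
  have "p \<in> S" using a unfolding interior_robot by (auto simp: linf_def)
  moreover have "1/2 \<le> linf (y - p)" if y: "y \<in> frontier S" for y
  proof (rule ccontr)
    assume "\<not> ?thesis"
    then have "y \<in> interior (robot p)" unfolding interior_robot by simp
    then have "y \<in> interior S" using a by (meson interior_maximal open_interior subsetD)
    then show False using y by (simp add: frontier_def)
  qed
  ultimately show "p \<in> inner S" unfolding inner_def by auto
next
  assume a: "p \<in> inner S"
  show "interior (robot p) \<subseteq> S"
  proof
    fix q assume "q \<in> interior (robot p)"
    then have q: "linf (q - p) < 1/2" unfolding interior_robot by auto
    show "q \<in> S"
    proof (rule ccontr)
      assume "q \<notin> S"
      have "closed_segment p q \<inter> S \<noteq> {}" using a inner_sub by auto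
      moreover have "closed_segment p q - S \<noteq> {}" using \<open>q \<notin> S\<close> by auto
      ultimately obtain y where y: "y \<in> closed_segment p q" "y \<in> frontier S"
        using connected_Int_frontier[OF connected_segment] by blast
      have "linf (y - p) < 1/2" using linf_seg[OF y(1)] q by linarith
      moreover have "linf (y - p) \<ge> 1/2" using a y(2) unfolding inner_def by auto
      ultimately show False by linarith
    qed
  qed
qed

lemma F2_iff: "(p1, p2) \<in> F2 S \<longleftrightarrow> linf (p1 - p2) \<ge> 1 \<and> p1 \<in> inner S \<and> p2 \<in> inner S"
  unfolding F2_def using robot_inner[of p1 S] robot_inner[of p2 S] by simp



definition dt :: "pt \<Rightarrow> pt \<Rightarrow> real" where "dt u x = fst u * fst x + snd u * snd x"
definition cr :: "pt \<Rightarrow> pt \<Rightarrow> real" where "cr a b = fst a * snd b - snd a * fst b"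

lemma ray_exit:
  fixes A :: "pt set"
  assumes "compact A" "p \<in> A" "u \<noteq> 0"
  shows "\<exists>t\<ge>0. (\<forall>s\<in>{0..t}. p + s *\<^sub>R u \<in> A) \<and> p + t *\<^sub>R u \<in> frontier A"
proof -
  define L where "L = {t. 0 \<le> t \<and> (\<forall>s\<in>{0..t}. p + s *\<^sub>R u \<in> A)}"
  obtain B where B: "\<forall>x\<in>A. norm x \<le> B" using compact_imp_bounded[OF assms(1)] bounded_iff by auto
  have nu: "norm u > 0" using assms(3) by simp
  have bd: "t \<le> (B + norm p) / norm u" if "t \<in> L" for t
  proof -
    have t0: "0 \<le> t" using that L_def by auto
    have "p + t *\<^sub>R u \<in> A" using that L_def by auto
    then have "norm (p + t *\<^sub>R u) \<le> B" using B by auto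
    moreover have "norm (t *\<^sub>R u) \<le> norm (p + t *\<^sub>R u) + norm p"
      by (metis add_diff_cancel_left' norm_triangle_ineq4)
    moreover have "norm (t *\<^sub>R u) = t * norm u" using t0 by simp
    ultimately have "t * norm u \<le> B + norm p" by linarith
    then show ?thesis using nu by (simp add: pos_le_divide_eq)
  qed
  have L0: "0 \<in> L" using assms(2) L_def by auto
  then have ne: "L \<noteq> {}" by auto
  have bdd: "bdd_above L" using bd by (intro bdd_aboveI) auto
  define t where "t = Sup L"
  have t0: "0 \<le> t" using cSup_upper[OF L0 bdd] t_def by simp
  have below: "p + s *\<^sub>R u \<in> A" if s0: "0 \<le> s" and st: "s < t" for s
  proof -
    obtain t' where "t' \<in> L" "s < t'" using less_cSupD[OF ne, of s] st t_def by blast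
    then show ?thesis using s0 L_def by auto
  qed
  have at: "p + t *\<^sub>R u \<in> A"
  proof (cases "t = 0")
    case True then show ?thesis using assms(2) by simp
  next
    case False
    then have tp: "t > 0" using t0 by simp
    have neq: "p \<noteq> p + t *\<^sub>R u" using tp assms(3) by simp
    have "open_segment p (p + t *\<^sub>R u) \<subseteq> A"
    proof
      fix x assume "x \<in> open_segment p (p + t *\<^sub>R u)"
      then obtain v where v: "0 < v" "v < 1" "x = (1 - v) *\<^sub>R p + v *\<^sub>R (p + t *\<^sub>R u)"
        unfolding in_segment by blast
      then have "x = p + (v * t) *\<^sub>R u" by (simp add: algebra_simps)
      moreover have "0 \<le> v * t" "v * t < t" using v tp by auto
      ultimately show "x \<in> A" using below by simp
    qed
    then have "closure (open_segment p (p + t *\<^sub>R u)) \<subseteq> A"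
      using closure_minimal compact_imp_closed[OF assms(1)] by blast
    then have "closed_segment p (p + t *\<^sub>R u) \<subseteq> A" using neq by simp
    then show ?thesis by auto
  qed
  have seg: "\<forall>s\<in>{0..t}. p + s *\<^sub>R u \<in> A"
  proof
    fix s assume "s \<in> {0..t}"
    then show "p + s *\<^sub>R u \<in> A" using below at by (cases "s = t") auto
  qed
  have "p + t *\<^sub>R u \<notin> interior A"
  proof
    assume "p + t *\<^sub>R u \<in> interior A"
    then obtain e where e: "e > 0" "ball (p + t *\<^sub>R u) e \<subseteq> A"
      using mem_interior by blast
    define t' where "t' = t + e / (2 * norm u)"
    have "t' \<in> L"
      unfolding L_def
    proof (intro CollectI conjI ballI)
      show "0 \<le> t'" using t0 e nu t'_def by simp
      fix s assume s: "s \<in> {0..t'}"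
      show "p + s *\<^sub>R u \<in> A"
      proof (cases "s \<le> t")
        case True then show ?thesis using seg s by auto
      next
        case False
        have "dist (p + t *\<^sub>R u) (p + s *\<^sub>R u) = norm ((s - t) *\<^sub>R u)"
          by (simp add: dist_norm algebra_simps norm_minus_commute)
        also have "\<dots> = (s - t) * norm u" using False by simp
        also have "\<dots> \<le> (e / (2 * norm u)) * norm u"
          using s False nu t'_def by (intro mult_right_mono) auto
        also have "\<dots> = e / 2" using nu by simp
        finally have "dist (p + t *\<^sub>R u) (p + s *\<^sub>R u) < e" using e by linarith
        then show ?thesis using e by auto
      qed
    qed
    then have "t' \<le> t" using cSup_upper[OF _ bdd] t_def by simp
    moreover have "t' > t" using e nu t'_def by simp
    ultimately show False by simp
  qed
  then have "p + t *\<^sub>R u \<in> frontier A"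
    using at compact_imp_closed[OF assms(1)] by (simp add: frontier_def)
  then show ?thesis using t0 seg by blast
qed

definition invar :: "pt set \<Rightarrow> pt \<Rightarrow> real \<Rightarrow> pt \<Rightarrow> bool" where
  "invar A x e d \<longleftrightarrow> (\<forall>y\<in>ball x e. \<forall>z\<in>ball x e. \<forall>t::real.
            z = y + t *\<^sub>R d \<longrightarrow> (y \<in> A \<longleftrightarrow> z \<in> A))"

lemma is_vertex_iff: "is_vertex A x \<longleftrightarrow> x \<in> frontier A \<and> \<not> (\<exists>e>0. \<exists>d. d \<noteq> 0 \<and> invar A x e d)"
  unfolding is_vertex_def invar_def by blast

lemma invar_sub: "invar A x e d \<Longrightarrow> ball y r \<subseteq> ball x e \<Longrightarrow> invar A y r d"
  unfolding invar_def by blast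

lemma invar_scale: assumes "invar A x e d" shows "invar A x e (k *\<^sub>R d)"
  unfolding invar_def
proof (intro ballI allI impI)
  fix y z t assume "y \<in> ball x e" "z \<in> ball x e" "z = y + t *\<^sub>R (k *\<^sub>R d)"
  then show "(y \<in> A) = (z \<in> A)" using assms unfolding invar_def by auto
qed

lemma frontier_shift:
  assumes "closed A" "invar A v e d" "v \<in> frontier A" "w = v + \<tau> *\<^sub>R d" "dist v w < e/2"
  shows "w \<in> frontier A"
proof -
  have vA: "v \<in> A" using assms(1,3) frontier_subset_closed by blast
  have e: "e > 0" using assms(5) by (metis dist_not_less_zero field_sum_of_halves half_gt_zero_iff linorder_not_less order_le_less_trans)
  have vb: "v \<in> ball v e" using e by simp
  have wb: "w \<in> ball v e" using assms(5) e by simp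
  have "(v \<in> A) = (w \<in> A)" using assms(2) vb wb assms(4) unfolding invar_def by blast
  then have wA: "w \<in> A" using vA by simp
  have "w \<notin> interior A"
  proof
    assume "w \<in> interior A"
    then obtain r where r: "r > 0" "ball w r \<subseteq> A" using mem_interior by blast
    define r' where "r' = min r (e/2)"
    have "ball v r' \<subseteq> A"
    proof
      fix q assume q: "q \<in> ball v r'"
      define q' where "q' = q + \<tau> *\<^sub>R d"
      have "dist w q' = dist v q" unfolding q'_def assms(4) dist_norm by (simp add: algebra_simps)
      then have "q' \<in> ball w r" using q r'_def by auto
      then have q'A: "q' \<in> A" using r by auto
      have "dist v q' \<le> dist v w + dist w q'" by (rule dist_triangle)
      then have "q' \<in> ball v e" using assms(5) \<open>dist w q' = dist v q\<close> q r'_def by auto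
      moreover have "q \<in> ball v e" using q r'_def e by auto
      ultimately show "q \<in> A" using assms(2) q'A unfolding invar_def q'_def by blast
    qed
    moreover have "r' > 0" using r e r'_def by simp
    ultimately have "v \<in> interior A" by (meson centre_in_ball interior_maximal open_ball subsetD)
    then show False using assms(3) by (simp add: frontier_def)
  qed
  then show ?thesis using wA assms(1) by (simp add: frontier_def)
qed

lemma abs_fst_le: "\<bar>fst (x::pt)\<bar> \<le> norm x"
  by (metis norm_fst_le prod.collapse real_norm_def)
lemma abs_snd_le: "\<bar>snd (x::pt)\<bar> \<le> norm x"
  by (metis norm_snd_le prod.collapse real_norm_def)

lemma cr_bound: "\<bar>cr x d\<bar> \<le> norm x * (\<bar>fst d\<bar> + \<bar>snd d\<bar>)"
proof -
  have "\<bar>cr x d\<bar> \<le> \<bar>fst x\<bar> * \<bar>snd d\<bar> + \<bar>snd x\<bar> * \<bar>fst d\<bar>"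
    unfolding cr_def by (metis abs_mult abs_triangle_ineq4)
  also have "\<dots> \<le> norm x * \<bar>snd d\<bar> + norm x * \<bar>fst d\<bar>"
    by (intro add_mono mult_right_mono) (auto simp: abs_fst_le abs_snd_le)
  finally show ?thesis by (simp add: algebra_simps)
qed

lemma two_dir:
  assumes "w \<in> A" "e > 0" "invar A w e d" "invar A w e d'" "cr d d' \<noteq> 0"
  shows "w \<in> interior A"
proof -
  define c where "c = cr d d'"
  define K where "K = (\<bar>fst d'\<bar> + \<bar>snd d'\<bar>) * norm d / \<bar>c\<bar>"
  have K0: "K \<ge> 0" unfolding K_def by simp
  define \<rho> where "\<rho> = e / (K + 1)"
  have \<rho>0: "\<rho> > 0" using assms(2) K0 \<rho>_def by simp
  have \<rho>e: "\<rho> \<le> e" using assms(2) K0 \<rho>_def by (simp add: divide_le_eq)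
  have "ball w \<rho> \<subseteq> A"
  proof
    fix z assume z: "z \<in> ball w \<rho>"
    define x where "x = z - w"
    define \<alpha> where "\<alpha> = cr x d' / c"
    define \<beta> where "\<beta> = cr d x / c"
    have c0: "c \<noteq> 0" using assms(5) c_def by simp
    have "c *\<^sub>R x = cr x d' *\<^sub>R d + cr d x *\<^sub>R d'"
      unfolding c_def cr_def by (auto simp: prod_eq_iff; algebra)
    then have "(1/c) *\<^sub>R (c *\<^sub>R x) = (1/c) *\<^sub>R (cr x d' *\<^sub>R d + cr d x *\<^sub>R d')" by simp
    then have dec: "x = \<alpha> *\<^sub>R d + \<beta> *\<^sub>R d'"
      unfolding \<alpha>_def \<beta>_def using c0 by (simp add: scaleR_add_right divide_inverse_commute)
    have nx: "norm x < \<rho>" using z unfolding x_def by (simp add: dist_norm norm_minus_commute)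
    have "\<bar>\<alpha>\<bar> * norm d \<le> norm x * K"
    proof -
      have "\<bar>\<alpha>\<bar> = \<bar>cr x d'\<bar> / \<bar>c\<bar>" unfolding \<alpha>_def by (simp add: abs_divide)
      also have "\<dots> \<le> norm x * (\<bar>fst d'\<bar> + \<bar>snd d'\<bar>) / \<bar>c\<bar>"
        by (intro divide_right_mono cr_bound) simp
      finally have "\<bar>\<alpha>\<bar> * norm d \<le> norm x * (\<bar>fst d'\<bar> + \<bar>snd d'\<bar>) / \<bar>c\<bar> * norm d"
        by (intro mult_right_mono) auto
      then show ?thesis unfolding K_def by (simp add: algebra_simps)
    qed
    also have "\<dots> \<le> \<rho> * K" using nx K0 by (intro mult_right_mono) auto
    also have "\<dots> < e" unfolding \<rho>_def using assms(2) K0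
      by (simp add: field_simps)
    finally have nad: "norm (\<alpha> *\<^sub>R d) < e" by simp
    define y where "y = w + \<alpha> *\<^sub>R d"
    have yb: "y \<in> ball w e" using nad unfolding y_def by (simp add: dist_norm)
    have zb: "z \<in> ball w e" using z \<rho>e by auto
    have wb: "w \<in> ball w e" using assms(2) by simp
    have "y \<in> A" using assms(3) wb yb assms(1) unfolding invar_def y_def by blast
    moreover have "z = y + \<beta> *\<^sub>R d'" using dec unfolding y_def x_def by (simp add: algebra_simps)
    ultimately show "z \<in> A" using assms(4) yb zb unfolding invar_def by blast
  qed
  then show ?thesis using \<rho>0 by (meson centre_in_ball interior_maximal open_ball subsetD)
qed

lemma par: assumes "d \<noteq> 0" "cr d d' = 0" shows "d' = (dt d d' / dt d d) *\<^sub>R d"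
proof -
  have n: "fst d * fst d + snd d * snd d \<noteq> 0" using assms(1)
    by (metis prod_eq_iff fst_zero snd_zero sum_squares_eq_zero_iff)
  have "fst d' * (fst d * fst d + snd d * snd d) = (fst d * fst d' + snd d * snd d') * fst d"
  proof -
    have "fst d' * (fst d * fst d + snd d * snd d) = (fst d * fst d' + snd d * snd d') * fst d - snd d * cr d d'"
      unfolding cr_def by algebra
    then show ?thesis using assms(2) by simp
  qed
  moreover have "snd d' * (fst d * fst d + snd d * snd d) = (fst d * fst d' + snd d * snd d') * snd d"
  proof -
    have "snd d' * (fst d * fst d + snd d * snd d) = (fst d * fst d' + snd d * snd d') * snd d + fst d * cr d d'"
      unfolding cr_def by algebra
    then show ?thesis using assms(2) by simp
  qed
  ultimately show ?thesis using n unfolding dt_def by (simp add: prod_eq_iff field_simps)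
qed

lemma dist_line: "dist (h + t *\<^sub>R d) (h + s *\<^sub>R d) = \<bar>t - s\<bar> * norm (d::pt)"
proof -
  have "h + t *\<^sub>R d - (h + s *\<^sub>R d) = (t - s) *\<^sub>R d" by (simp add: algebra_simps)
  then show ?thesis by (simp add: dist_norm)
qed

lemma ball_half: assumes "dist v w < e/2" shows "ball w (e/2) \<subseteq> ball v e"
proof
  fix q assume "q \<in> ball w (e/2)"
  then have "dist w q < e/2" by simp
  moreover have "dist v q \<le> dist v w + dist w q" by (rule dist_triangle)
  ultimately show "q \<in> ball v e" using assms by simp
qed

lemma bounded_ray:
  assumes "\<forall>x\<in>A. norm x \<le> B" "(u::pt) \<noteq> 0" "p + t *\<^sub>R u \<in> A" "0 \<le> t"
  shows "t \<le> (B + norm p) / norm u"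
proof -
  have nu: "norm u > 0" using assms(2) by simp
  have "norm (p + t *\<^sub>R u) \<le> B" using assms by auto
  moreover have "norm (t *\<^sub>R u) \<le> norm (p + t *\<^sub>R u) + norm p"
    by (metis add_diff_cancel_left' norm_triangle_ineq4)
  moreover have "norm (t *\<^sub>R u) = t * norm u" using assms(4) by simp
  ultimately have "t * norm u \<le> B + norm p" by linarith
  then show ?thesis using nu by (simp add: pos_le_divide_eq)
qed

lemma vstep:
  fixes A :: "pt set"
  assumes "compact A" "h \<in> frontier A"
  shows "\<exists>d t. 0 \<le> t \<and> (\<forall>s\<in>{0..t}. h + s *\<^sub>R d \<in> A) \<and> is_vertex A (h + t *\<^sub>R d) \<and> dt u d \<ge> 0"
proof (cases "is_vertex A h")
  case True
  have "h \<in> A" using assms frontier_subset_closed compact_imp_closed by blast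
  then show ?thesis using True by (intro exI[of _ 0] exI[of _ 0]) (auto simp: dt_def)
next
  case False
  have clA: "closed A" using assms(1) compact_imp_closed by blast
  have frA: "frontier A \<subseteq> A" using clA frontier_subset_closed by blast
  obtain B where B: "\<forall>x\<in>A. norm x \<le> B" using compact_imp_bounded[OF assms(1)] bounded_iff by auto
  obtain e0 d0 where e0: "e0 > 0" "d0 \<noteq> 0" "invar A h e0 d0"
    using False assms(2) unfolding is_vertex_iff by blast
  define d where "d = (if dt u d0 \<ge> 0 then d0 else (-1) *\<^sub>R d0)"
  have d0: "d \<noteq> 0" using e0 d_def by simp
  have du: "dt u d \<ge> 0" using d_def by (auto simp: dt_def)
  have hinv: "invar A h e0 d" using e0 invar_scale[OF e0(3), of "-1"] d_def by simp
  have nd: "norm d > 0" using d0 by simp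
  define good where "good s \<longleftrightarrow> h + s *\<^sub>R d \<in> frontier A \<and> (\<exists>e>0. invar A (h + s *\<^sub>R d) e d)" for s
  define L where "L = {t. 0 \<le> t \<and> (\<forall>s\<in>{0..t}. good s)}"
  have L0: "0 \<in> L" using assms(2) hinv e0 unfolding L_def good_def by auto
  then have ne: "L \<noteq> {}" by auto
  have bdd: "bdd_above L"
  proof (intro bdd_aboveI)
    fix t assume "t \<in> L"
    then have "h + t *\<^sub>R d \<in> A" "0 \<le> t" using frA unfolding L_def good_def by auto
    then show "t \<le> (B + norm h) / norm d" using bounded_ray[OF B d0] by blast
  qed
  define T where "T = Sup L"
  have T0: "0 \<le> T" using cSup_upper[OF L0 bdd] T_def by simp
  have below: "good s" if s0: "0 \<le> s" and st: "s < T" for s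
  proof -
    obtain t' where "t' \<in> L" "s < t'" using less_cSupD[OF ne, of s] st T_def by blast
    then show ?thesis using s0 L_def by auto
  qed
  define v where "v = h + T *\<^sub>R d"
  have vfr: "v \<in> frontier A"
  proof (cases "T = 0")
    case True then show ?thesis using assms(2) v_def by simp
  next
    case False
    then have tp: "T > 0" using T0 by simp
    have neq: "h \<noteq> v" using tp d0 v_def by simp
    have "open_segment h v \<subseteq> frontier A"
    proof
      fix x assume "x \<in> open_segment h v"
      then obtain r where r: "0 < r" "r < 1" "x = (1 - r) *\<^sub>R h + r *\<^sub>R v"
        unfolding in_segment by blast
      then have "x = h + (r * T) *\<^sub>R d" unfolding v_def by (simp add: algebra_simps)
      moreover have "0 \<le> r * T" "r * T < T" using r tp by auto
      ultimately show "x \<in> frontier A" using below unfolding good_def by simp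
    qed
    then have "closure (open_segment h v) \<subseteq> frontier A"
      using closure_minimal frontier_closed by blast
    then have "closed_segment h v \<subseteq> frontier A" using neq by simp
    then show ?thesis by auto
  qed
  have seg: "\<forall>s\<in>{0..T}. h + s *\<^sub>R d \<in> A"
  proof
    fix s assume s: "s \<in> {0..T}"
    show "h + s *\<^sub>R d \<in> A"
    proof (cases "s = T")
      case True then show ?thesis using vfr frA v_def by auto
    next
      case False then show ?thesis using below[of s] s frA unfolding good_def by auto
    qed
  qed
  have "is_vertex A v"
    unfolding is_vertex_iff
  proof (intro conjI notI vfr)
    assume "\<exists>e>0. \<exists>d'. d' \<noteq> 0 \<and> invar A v e d'"
    then obtain e' d' where e': "e' > 0" "d' \<noteq> 0" "invar A v e' d'" by blast
    show False
    proof (cases "cr d d' = 0")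
      case True
      define k where "k = dt d d' / dt d d"
      have dk: "d' = k *\<^sub>R d" using par[OF d0 True] k_def by simp
      have k0: "k \<noteq> 0" using dk e' by auto
      have "invar A v e' ((1/k) *\<^sub>R d')" using invar_scale[OF e'(3)] .
      then have vinv: "invar A v e' d" using dk k0 by simp
      define t' where "t' = T + e' / (4 * norm d)"
      have "t' \<in> L"
        unfolding L_def
      proof (intro CollectI conjI ballI)
        show "0 \<le> t'" using T0 e' nd t'_def by simp
        fix s assume s: "s \<in> {0..t'}"
        show "good s"
        proof (cases "s < T")
          case True then show ?thesis using below s by auto
        next
          case False
          have "dist v (h + s *\<^sub>R d) = \<bar>T - s\<bar> * norm d" unfolding v_def by (rule dist_line)
          also have "\<dots> = (s - T) * norm d" using False by simp
          also have "\<dots> \<le> (e' / (4 * norm d)) * norm d"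
            using s False nd t'_def by (intro mult_right_mono) auto
          also have "\<dots> = e' / 4" using nd by simp
          finally have dvw: "dist v (h + s *\<^sub>R d) < e'/2" using e' by linarith
          have w: "h + s *\<^sub>R d = v + (s - T) *\<^sub>R d" unfolding v_def by (simp add: algebra_simps)
          have "h + s *\<^sub>R d \<in> frontier A" using frontier_shift[OF clA vinv vfr w dvw] .
          moreover have "invar A (h + s *\<^sub>R d) (e'/2) d" using invar_sub[OF vinv ball_half[OF dvw]] .
          ultimately show ?thesis unfolding good_def using e' by (metis half_gt_zero)
        qed
      qed
      then have "t' \<le> T" using cSup_upper[OF _ bdd] T_def by simp
      moreover have "t' > T" using e' nd t'_def by simp
      ultimately show False by simp
    next
      case False
      define \<rho> where "\<rho> = e' / (2 * norm d)"
      have \<rho>0: "\<rho> > 0" using e' nd \<rho>_def by simp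
      obtain t' where t': "t' \<in> L" "T - \<rho> < t'" using less_cSupD[OF ne, of "T - \<rho>"] \<rho>0 T_def by auto
      have t'T: "t' \<le> T" using cSup_upper[OF t'(1) bdd] T_def by simp
      have gt: "good t'" using t'(1) unfolding L_def by auto
      define w where "w = h + t' *\<^sub>R d"
      have "dist v w = \<bar>T - t'\<bar> * norm d" unfolding v_def w_def by (rule dist_line)
      also have "\<dots> = (T - t') * norm d" using t'T by simp
      also have "\<dots> < \<rho> * norm d" using t' nd by (intro mult_strict_right_mono) auto
      also have "\<dots> = e' / 2" using nd \<rho>_def by simp
      finally have dvw: "dist v w < e'/2" .
      obtain e1 where e1: "e1 > 0" "invar A w e1 d" using gt unfolding good_def w_def by blast
      define e2 where "e2 = min e1 (e'/2)"
      have e2: "e2 > 0" using e1 e' e2_def by simp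
      have "ball w e2 \<subseteq> ball w e1" using e2_def by (simp add: subset_ball)
      then have i1: "invar A w e2 d" using invar_sub[OF e1(2)] by blast
      have "ball w e2 \<subseteq> ball v e'" using ball_half[OF dvw] e2_def by auto
      then have i2: "invar A w e2 d'" using invar_sub[OF e'(3)] by blast
      have wfr: "w \<in> frontier A" using gt unfolding good_def w_def by blast
      then have "w \<in> A" using frA by blast
      then have "w \<in> interior A" using two_dir[OF _ e2 i1 i2 False] by blast
      then show False using wfr by (simp add: frontier_def)
    qed
  qed
  then show ?thesis using T0 seg du v_def by blast
qed



lemma alg1: fixes q1 q2 a1 a2 b1 b2 r :: real
  shows "q1 = (1 - r) * a1 + r * b1 \<Longrightarrow> q2 = (1 - r) * a2 + r * b2 \<Longrightarrow>
     (q1 - a1) * (b2 - a2) - (q2 - a2) * (b1 - a1) = 0"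
  by algebra

lemma alg_e1: fixes x1 x2 a1 a2 b1 b2 c1 c2 p1 p2 r0 r1 :: real
  assumes "x1 = (1 - r0) * a1 + r0 * b1" "x2 = (1 - r0) * a2 + r0 * b2"
   "p1 = (1 - r1) * b1 + r1 * c1" "p2 = (1 - r1) * b2 + r1 * c2"
  shows "r1 * ((c1 - b1) * (b2 - a2) - (c2 - b2) * (b1 - a1)) = (p1 - x1) * (b2 - a2) - (p2 - x2) * (b1 - a1)"
  using assms by algebra

lemma alg_e2: fixes x1 x2 a1 a2 b1 b2 c1 c2 p1 p2 m1 m2 r0 r1 r2 :: real
  assumes "x1 = (1 - r0) * a1 + r0 * b1" "x2 = (1 - r0) * a2 + r0 * b2"
   "p1 = (1 - r1) * b1 + r1 * c1" "p2 = (1 - r1) * b2 + r1 * c2"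
   "m1 = (1 - r2) * b1 + r2 * c1" "m2 = (1 - r2) * b2 + r2 * c2"
   "2 * m1 = x1 + p1" "2 * m2 = x2 + p2"
  shows "((c1 - b1) * (b2 - a2) - (c2 - b2) * (b1 - a1)) * (x1 - b1) = 0"
    "((c1 - b1) * (b2 - a2) - (c2 - b2) * (b1 - a1)) * (x2 - b2) = 0"
  using assms by algebra+

lemma seg_obtain: fixes q a b :: pt assumes "q \<in> closed_segment a b"
  obtains r where "0 \<le> r" "r \<le> 1" "fst q = (1 - r) * fst a + r * fst b" "snd q = (1 - r) * snd a + r * snd b"
proof -
  obtain u where u: "0 \<le> u" "u \<le> 1" "q = (1 - u) *\<^sub>R a + u *\<^sub>R b"
    using assms unfolding closed_segment_def by auto
  show thesis using that[of u] u by simp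
qed

lemma cr_on_seg: fixes q a b :: pt assumes "q \<in> closed_segment a b" shows "cr (q - a) (b - a) = 0"
proof -
  obtain r where "fst q = (1 - r) * fst a + r * fst b" "snd q = (1 - r) * snd a + r * snd b"
    using seg_obtain[OF assms] by metis
  then show ?thesis unfolding cr_def using alg1 by simp
qed

lemma seg_key:
  fixes a b c x a' :: pt
  assumes x: "x \<in> closed_segment a b" and xb: "x \<noteq> b"
    and sub: "closed_segment x a' \<subseteq> closed_segment a b \<union> closed_segment b c"
  shows "cr (a' - x) (b - a) = 0"
proof (rule ccontr)
  assume k: "cr (a' - x) (b - a) \<noteq> 0"
  have fx: "cr (x - a) (b - a) = 0" using cr_on_seg[OF x] .
  have lin: "cr (q - a) (b - a) = cr (q - x) (b - a) + cr (x - a) (b - a)" for q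
    unfolding cr_def by (simp add: algebra_simps)
  have a'I: "a' \<in> closed_segment a b \<union> closed_segment b c" using sub by auto
  have "a' \<notin> closed_segment a b"
  proof
    assume "a' \<in> closed_segment a b"
    then have "cr (a' - a) (b - a) = 0" by (rule cr_on_seg)
    then show False using lin[of a'] fx k by simp
  qed
  then have a'bc: "a' \<in> closed_segment b c" using a'I by blast
  define m where "m = midpoint x a'"
  have "m \<in> closed_segment x a'" unfolding m_def by (rule midpoint_in_closed_segment)
  then have mI: "m \<in> closed_segment a b \<union> closed_segment b c" using sub by auto
  have mx: "cr (m - x) (b - a) = cr (a' - x) (b - a) / 2"
    unfolding m_def midpoint_def cr_def by (simp add: field_simps)
  have "m \<notin> closed_segment a b"
  proof
    assume "m \<in> closed_segment a b"
    then have "cr (m - a) (b - a) = 0" by (rule cr_on_seg)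
    then show False using lin[of m] fx k mx by simp
  qed
  then have mbc: "m \<in> closed_segment b c" using mI by blast
  obtain r0 where r0: "fst x = (1 - r0) * fst a + r0 * fst b" "snd x = (1 - r0) * snd a + r0 * snd b"
    using seg_obtain[OF x] by metis
  obtain r1 where r1: "fst a' = (1 - r1) * fst b + r1 * fst c" "snd a' = (1 - r1) * snd b + r1 * snd c"
    using seg_obtain[OF a'bc] by metis
  obtain r2 where r2: "fst m = (1 - r2) * fst b + r2 * fst c" "snd m = (1 - r2) * snd b + r2 * snd c"
    using seg_obtain[OF mbc] by metis
  have mm: "2 * fst m = fst x + fst a'" "2 * snd m = snd x + snd a'"
    unfolding m_def midpoint_def by simp_all
  define \<gamma> where "\<gamma> = cr (c - b) (b - a)"
  have e1: "r1 * \<gamma> = cr (a' - x) (b - a)"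
    using alg_e1[OF r0 r1] unfolding \<gamma>_def cr_def by simp
  have e2: "\<gamma> * (fst x - fst b) = 0" "\<gamma> * (snd x - snd b) = 0"
    using alg_e2[OF r0 r1 r2 mm] unfolding \<gamma>_def cr_def by simp_all
  have "\<gamma> \<noteq> 0" using e1 k by auto
  then have "x = b" using e2 by (simp add: prod_eq_iff)
  then show False using xb by simp
qed

lemma alg_par: fixes p1 p2 q1 q2 w1 w2 :: real
  assumes "p1 * w2 - p2 * w1 = 0" "q1 * w2 - q2 * w1 = 0"
  shows "(p1 * q2 - p2 * q1) * w1 = 0" "(p1 * q2 - p2 * q1) * w2 = 0"
  using assms by algebra+

lemma par2: fixes p q w :: pt
  assumes "w \<noteq> 0" "cr p w = 0" "cr q w = 0" shows "cr p q = 0"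
proof -
  have "cr p q * fst w = 0" "cr p q * snd w = 0"
    using alg_par[of "fst p" "snd w" "snd p" "fst w" "fst q" "snd q"] assms(2,3) unfolding cr_def by simp_all
  moreover have "fst w \<noteq> 0 \<or> snd w \<noteq> 0" using assms(1) by (simp add: prod_eq_iff)
  ultimately show ?thesis by auto
qed

lemma turnset_sub:
  fixes a b c :: pt
  assumes I: "I = closed_segment a b \<union> closed_segment b c"
  shows "{x \<in> I. \<exists>a' b'. a' \<noteq> x \<and> b' \<noteq> x \<and> closed_segment x a' \<subseteq> I \<and> closed_segment x b' \<subseteq> I \<and>
       fst (a' - x) * snd (b' - x) - snd (a' - x) * fst (b' - x) \<noteq> 0} \<subseteq> {b}"
proof
  fix x assume "x \<in> {x \<in> I. \<exists>a' b'. a' \<noteq> x \<and> b' \<noteq> x \<and> closed_segment x a' \<subseteq> I \<and> closed_segment x b' \<subseteq> I \<and>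
       fst (a' - x) * snd (b' - x) - snd (a' - x) * fst (b' - x) \<noteq> 0}"
  then obtain a' b' where xI: "x \<in> I" and s1: "closed_segment x a' \<subseteq> I" and s2: "closed_segment x b' \<subseteq> I"
    and k: "cr (a' - x) (b' - x) \<noteq> 0" unfolding cr_def by blast
  show "x \<in> {b}"
  proof (rule ccontr)
    assume "x \<notin> {b}"
    then have xb: "x \<noteq> b" by simp
    show False
    proof (cases "x \<in> closed_segment a b")
      case True
      have "a \<noteq> b" using True xb by auto
      then have w: "b - a \<noteq> 0" by simp
      have "cr (a' - x) (b - a) = 0" using seg_key[OF True xb] s1 I by blast
      moreover have "cr (b' - x) (b - a) = 0" using seg_key[OF True xb] s2 I by blast
      ultimately show False using par2[OF w] k by blast
    next
      case False
      then have x2: "x \<in> closed_segment c b" using xI I by (auto simp: closed_segment_commute)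
      have I2: "I = closed_segment c b \<union> closed_segment b a" using I by (auto simp: closed_segment_commute)
      have "c \<noteq> b" using x2 xb by auto
      then have w: "b - c \<noteq> 0" by simp
      have "cr (a' - x) (b - c) = 0" using seg_key[OF x2 xb] s1 I2 by blast
      moreover have "cr (b' - x) (b - c) = 0" using seg_key[OF x2 xb] s2 I2 by blast
      ultimately show False using par2[OF w] k by blast
    qed
  qed
qed

lemma turns_two: "m ` {0..T} = closed_segment a b \<union> closed_segment b c \<Longrightarrow> turns T m \<subseteq> {b}"
  unfolding turns_def using turnset_sub by presburger

lemma turns_one: assumes "m ` {0..T} = closed_segment a b" shows "turns T m = {}"
proof (cases "a = b")
  case True
  then have "m ` {0..T} = {a}" using assms by simp
  then show ?thesis unfolding turns_def by auto
next
  case False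
  have "m ` {0..T} = closed_segment a b \<union> closed_segment b b" using assms by auto
  then have "turns T m \<subseteq> {b}" by (rule turns_two)
  moreover have "m ` {0..T} = closed_segment b a \<union> closed_segment a a" using assms
    by (auto simp: closed_segment_commute)
  then have "turns T m \<subseteq> {a}" by (rule turns_two)
  ultimately show ?thesis using False by blast
qed



lemma lip1:
  fixes \<alpha> \<beta> \<gamma> s t :: real
  assumes st: "0 \<le> s" "s \<le> t" "t \<le> 1"
  defines "\<phi> \<equiv> \<lambda>x. if x \<le> 1/2 then (1 - 2 * x) * \<alpha> + (2 * x) * \<beta> else (1 - (2 * x-1)) * \<beta> + (2 * x-1) * \<gamma>"
  shows "\<bar>\<phi> s - \<phi> t\<bar> \<le> 2 * (\<bar>\<beta> - \<alpha>\<bar> + \<bar>\<gamma> - \<beta>\<bar>) * \<bar>s - t\<bar>"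
proof -
  have ts: "\<bar>s - t\<bar> = t - s" using st by simp
  consider "t \<le> 1/2" | "1/2 < s" | "s \<le> 1/2" "1/2 < t" by linarith
  then show ?thesis
  proof cases
    case 1
    then have "\<phi> s - \<phi> t = 2 * (s - t) * (\<beta> - \<alpha>)" using st unfolding \<phi>_def by (simp add: algebra_simps)
    then have "\<bar>\<phi> s - \<phi> t\<bar> = 2 * (t - s) * \<bar>\<beta> - \<alpha>\<bar>" using st by (simp add: abs_mult)
    also have "\<dots> \<le> 2 * (t - s) * (\<bar>\<beta> - \<alpha>\<bar> + \<bar>\<gamma> - \<beta>\<bar>)" using st by (intro mult_left_mono) auto
    finally show ?thesis using ts by (simp add: algebra_simps)
  next
    case 2
    then have "\<phi> s - \<phi> t = 2 * (s - t) * (\<gamma> - \<beta>)" using st unfolding \<phi>_def by (simp add: algebra_simps)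
    then have "\<bar>\<phi> s - \<phi> t\<bar> = 2 * (t - s) * \<bar>\<gamma> - \<beta>\<bar>" using st by (simp add: abs_mult)
    also have "\<dots> \<le> 2 * (t - s) * (\<bar>\<beta> - \<alpha>\<bar> + \<bar>\<gamma> - \<beta>\<bar>)" using st by (intro mult_left_mono) auto
    finally show ?thesis using ts by (simp add: algebra_simps)
  next
    case 3
    then have "\<phi> s - \<phi> t = (1 - 2 * s) * (\<alpha> - \<beta>) - (2 * t - 1) * (\<gamma> - \<beta>)" unfolding \<phi>_def by (simp add: algebra_simps)
    then have "\<bar>\<phi> s - \<phi> t\<bar> \<le> abs ((1 - 2 * s) * (\<alpha> - \<beta>)) + abs ((2 * t - 1) * (\<gamma> - \<beta>))" by (simp add: abs_triangle_ineq4)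
    also have "\<dots> = (1 - 2 * s) * \<bar>\<beta> - \<alpha>\<bar> + (2 * t - 1) * \<bar>\<gamma> - \<beta>\<bar>" using 3 by (simp add: abs_mult abs_minus_commute)
    also have "\<dots> \<le> (2 * (t - s)) * \<bar>\<beta> - \<alpha>\<bar> + (2 * (t - s)) * \<bar>\<gamma> - \<beta>\<bar>"
      using 3 by (intro add_mono mult_right_mono) auto
    finally show ?thesis using ts by (simp add: algebra_simps)
  qed
qed

lemma lip1':
  fixes \<alpha> \<beta> \<gamma> s t :: real
  assumes st: "0 \<le> s" "s \<le> 1" "0 \<le> t" "t \<le> 1"
  defines "\<phi> \<equiv> \<lambda>x. if x \<le> 1/2 then (1 - 2 * x) * \<alpha> + (2 * x) * \<beta> else (1 - (2 * x-1)) * \<beta> + (2 * x-1) * \<gamma>"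
  shows "\<bar>\<phi> s - \<phi> t\<bar> \<le> 2 * (\<bar>\<beta> - \<alpha>\<bar> + \<bar>\<gamma> - \<beta>\<bar>) * \<bar>s - t\<bar>"
proof (cases "s \<le> t")
  case True then show ?thesis using lip1[of s t] st unfolding \<phi>_def by blast
next
  case False
  then have "\<bar>\<phi> t - \<phi> s\<bar> \<le> 2 * (\<bar>\<beta> - \<alpha>\<bar> + \<bar>\<gamma> - \<beta>\<bar>) * \<bar>t - s\<bar>"
    using lip1[of t s] st unfolding \<phi>_def by auto
  then show ?thesis by (simp add: abs_minus_commute)
qed

lemma fst_pl: "fst ((linepath a b +++ linepath b c) x) = (if x \<le> 1/2 then (1 - 2 * x) * fst a + (2 * x) * fst b else (1 - (2 * x-1)) * fst b + (2 * x-1) * fst (c::pt))"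
  by (simp add: joinpaths_def linepath_def)
lemma snd_pl: "snd ((linepath a b +++ linepath b c) x) = (if x \<le> 1/2 then (1 - 2 * x) * snd a + (2 * x) * snd b else (1 - (2 * x-1)) * snd b + (2 * x-1) * snd (c::pt))"
  by (simp add: joinpaths_def linepath_def)

lemma lip_pl:
  fixes a b c :: pt
  assumes "0 \<le> s" "s \<le> 1" "0 \<le> t" "t \<le> 1"
  shows "lone ((linepath a b +++ linepath b c) s - (linepath a b +++ linepath b c) t) \<le> 2 * (lone (b - a) + lone (c - b)) * \<bar>s - t\<bar>"
proof -
  let ?P = "linepath a b +++ linepath b c"
  have "\<bar>fst (?P s) - fst (?P t)\<bar> \<le> 2 * (\<bar>fst b - fst a\<bar> + \<bar>fst c - fst b\<bar>) * \<bar>s - t\<bar>"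
    unfolding fst_pl using lip1'[OF assms, of "fst a" "fst b" "fst c"] by simp
  moreover have "\<bar>snd (?P s) - snd (?P t)\<bar> \<le> 2 * (\<bar>snd b - snd a\<bar> + \<bar>snd c - snd b\<bar>) * \<bar>s - t\<bar>"
    unfolding snd_pl using lip1'[OF assms, of "snd a" "snd b" "snd c"] by simp
  ultimately show ?thesis unfolding lone_def by (simp add: algebra_simps)
qed

lemma img_div: assumes "T > 0" shows "(\<lambda>t. t / T) ` {0..T} = {0..(1::real)}"
proof
  show "(\<lambda>t. t / T) ` {0..T} \<subseteq> {0..1}" using assms by (auto simp: divide_le_eq)
  show "{0..1} \<subseteq> (\<lambda>t. t / T) ` {0..T}"
  proof
    fix x :: real assume "x \<in> {0..1}"
    then have "x * T \<in> {0..T}" "x = (x * T) / T" using assms by (auto simp: mult_le_cancel_right1)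
    then show "x \<in> (\<lambda>t. t / T) ` {0..T}" by blast
  qed
qed

lemma traj3:
  fixes a b c :: pt
  assumes T: "T > 0" "2 * (lone (b - a) + lone (c - b)) \<le> T"
  shows "trajectory T (\<lambda>t. polyline [a,b,c] (t / T))"
    "(\<lambda>t. polyline [a,b,c] (t / T)) ` {0..T} = closed_segment a b \<union> closed_segment b c"
    "polyline [a,b,c] (0 / T) = a" "polyline [a,b,c] (T / T) = c"
proof -
  have P: "polyline [a,b,c] = linepath a b +++ linepath b c" by simp
  have "(\<lambda>t. polyline [a,b,c] (t / T)) ` {0..T} = polyline [a,b,c] ` ((\<lambda>t. t / T) ` {0..T})"
    by (simp add: image_image)
  then have img: "(\<lambda>t. polyline [a,b,c] (t / T)) ` {0..T} = path_image (polyline [a,b,c])"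
    unfolding path_image_def using img_div[OF T(1)] by simp
  also have "\<dots> = closed_segment a b \<union> closed_segment b c"
    unfolding P by (subst path_image_join) auto
  finally show "(\<lambda>t. polyline [a,b,c] (t / T)) ` {0..T} = closed_segment a b \<union> closed_segment b c" .
  show "polyline [a,b,c] (0 / T) = a" unfolding P by (simp add: joinpaths_def linepath_def)
  show "polyline [a,b,c] (T / T) = c" using T unfolding P by (simp add: joinpaths_def linepath_def)
  have lip: "lone (polyline [a,b,c] (s / T) - polyline [a,b,c] (t / T)) \<le> \<bar>s - t\<bar>"
    if "s \<in> {0..T}" "t \<in> {0..T}" for s t
  proof -
    have "s / T \<in> {0..1}" "t / T \<in> {0..1}" using that T by (auto simp: divide_le_eq)
    then have "lone (polyline [a,b,c] (s / T) - polyline [a,b,c] (t / T)) \<le> 2 * (lone (b - a) + lone (c - b)) * \<bar>s / T - t / T\<bar>"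
      unfolding P using lip_pl by auto
    also have "\<dots> = 2 * (lone (b - a) + lone (c - b)) * \<bar>s - t\<bar> / T"
      using T by (simp add: diff_divide_distrib[symmetric] abs_divide)
    also have "\<dots> \<le> T * \<bar>s - t\<bar> / T"
      using T by (intro divide_right_mono mult_right_mono) auto
    also have "\<dots> = \<bar>s - t\<bar>" using T by simp
    finally show ?thesis .
  qed
  show "trajectory T (\<lambda>t. polyline [a,b,c] (t / T))"
    unfolding trajectory_def using T lip img by (intro conjI exI[of _ "[a,b,c]"]) auto
qed



definition axis :: "pt \<Rightarrow> bool" where
  "axis u \<longleftrightarrow> u = (1,0) \<or> u = (-1,0) \<or> u = (0,1) \<or> u = (0,-1)"

lemma dt_lin: "dt w (p + s *\<^sub>R u) = dt w p + s * dt w u" unfolding dt_def by (simp add: algebra_simps)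
lemma dt_diff: "dt w (p - q) = dt w p - dt w q" unfolding dt_def by (simp add: algebra_simps)
lemma dt_neg: "dt (- u) x = - dt u x" unfolding dt_def by simp

lemma axis_props:
  assumes "axis u"
  shows "u \<noteq> 0" "dt u u = 1" "{(q1, q2). dt u (q1 - q2) \<ge> 1} \<in> orderings"
    "dt u w \<ge> 1 \<Longrightarrow> linf w \<ge> 1"
proof -
  show "u \<noteq> 0" "dt u u = 1" using assms unfolding axis_def dt_def by (auto simp: prod_eq_iff)
  show "dt u w \<ge> 1 \<Longrightarrow> linf w \<ge> 1" using assms unfolding axis_def dt_def linf_def by auto
  have o1: "{(p1, p2). fst p1 \<ge> fst p2 + 1} \<in> orderings" "{(p1, p2). fst p2 \<ge> fst p1 + 1} \<in> orderings"
    "{(p1, p2). snd p1 \<ge> snd p2 + 1} \<in> orderings" "{(p1, p2). snd p2 \<ge> snd p1 + 1} \<in> orderings"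
    unfolding orderings_def by blast+
  from assms consider "u = (1,0)" | "u = (-1,0)" | "u = (0,1)" | "u = (0,-1)" unfolding axis_def by blast
  then show "{(q1, q2). dt u (q1 - q2) \<ge> 1} \<in> orderings"
  proof cases
    case 1
    then have "{(q1, q2). dt u (q1 - q2) \<ge> 1} = {(p1, p2). fst p1 \<ge> fst p2 + 1}"
      unfolding dt_def by (auto simp: case_prod_beta)
    then show ?thesis using o1 by simp
  next
    case 2
    then have "{(q1, q2). dt u (q1 - q2) \<ge> 1} = {(p1, p2). fst p2 \<ge> fst p1 + 1}"
      unfolding dt_def by (auto simp: case_prod_beta)
    then show ?thesis using o1 by simp
  next
    case 3
    then have "{(q1, q2). dt u (q1 - q2) \<ge> 1} = {(p1, p2). snd p1 \<ge> snd p2 + 1}"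
      unfolding dt_def by (auto simp: case_prod_beta)
    then show ?thesis using o1 by simp
  next
    case 4
    then have "{(q1, q2). dt u (q1 - q2) \<ge> 1} = {(p1, p2). snd p2 \<ge> snd p1 + 1}"
      unfolding dt_def by (auto simp: case_prod_beta)
    then show ?thesis using o1 by simp
  qed
qed

lemma axis_exists: assumes "linf w \<ge> 1" shows "\<exists>u. axis u \<and> dt u w \<ge> 1"
proof -
  have "\<bar>fst w\<bar> \<ge> 1 \<or> \<bar>snd w\<bar> \<ge> 1" using assms unfolding linf_def by (simp add: le_max_iff_disj)
  then have "fst w \<ge> 1 \<or> - fst w \<ge> 1 \<or> snd w \<ge> 1 \<or> - snd w \<ge> 1" by auto
  then show ?thesis unfolding axis_def dt_def
    by (elim disjE) (rule exI, force)+
qed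

lemma seg_param: assumes "x \<in> closed_segment p (p + t *\<^sub>R u)" "0 \<le> t"
  shows "\<exists>s\<in>{0..t}. x = p + s *\<^sub>R (u::pt)"
proof -
  obtain r where r: "0 \<le> r" "r \<le> 1" "x = (1 - r) *\<^sub>R p + r *\<^sub>R (p + t *\<^sub>R u)"
    using assms(1) unfolding closed_segment_def by auto
  then have "x = p + (r * t) *\<^sub>R u" by (simp add: algebra_simps)
  moreover have "r * t \<in> {0..t}" using r assms(2) by (auto simp: mult_left_le_one_le)
  ultimately show ?thesis by blast
qed

lemma ray_seg:
  assumes "\<forall>s\<in>{0..t}. p + s *\<^sub>R u \<in> A" "0 \<le> t" "dt w u \<ge> 0"
  shows "closed_segment p (p + t *\<^sub>R u) \<subseteq> A" "\<forall>x\<in>closed_segment p (p + t *\<^sub>R u). dt w x \<ge> dt w p"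
proof -
  show "closed_segment p (p + t *\<^sub>R u) \<subseteq> A" using seg_param[OF _ assms(2)] assms(1) by blast
  show "\<forall>x\<in>closed_segment p (p + t *\<^sub>R u). dt w x \<ge> dt w p"
  proof
    fix x assume "x \<in> closed_segment p (p + t *\<^sub>R u)"
    then obtain s where "s \<in> {0..t}" "x = p + s *\<^sub>R u" using seg_param[OF _ assms(2)] by blast
    then show "dt w x \<ge> dt w p" using assms(3) by (simp add: dt_lin)
  qed
qed

lemma sched:
  fixes a1 b1 c1 a2 b2 c2 u :: pt
  assumes T: "T > 0" "2 * (lone (b1 - a1) + lone (c1 - b1)) \<le> T" "2 * (lone (b2 - a2) + lone (c2 - b2)) \<le> T"
    and I1: "closed_segment a1 b1 \<union> closed_segment b1 c1 \<subseteq> inner S"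
    and I2: "closed_segment a2 b2 \<union> closed_segment b2 c2 \<subseteq> inner S"
    and M1: "\<forall>x\<in>closed_segment a1 b1 \<union> closed_segment b1 c1. dt u x \<ge> dt u a1"
    and M2: "\<forall>x\<in>closed_segment a2 b2 \<union> closed_segment b2 c2. dt u x \<le> dt u a2"
    and sep: "dt u (a1 - a2) \<ge> 1" and ax: "axis u"
  shows "feasible_schedule S T (\<lambda>t. polyline [a1,b1,c1] (t / T)) (\<lambda>t. polyline [a2,b2,c2] (t / T))"
    "((\<lambda>t. polyline [a1,b1,c1] (t / T)) 0, (\<lambda>t. polyline [a2,b2,c2] (t / T)) 0) = (a1, a2)"
    "((\<lambda>t. polyline [a1,b1,c1] (t / T)) T, (\<lambda>t. polyline [a2,b2,c2] (t / T)) T) = (c1, c2)"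
    "(c1, c2) \<in> F2 S" "commonly_ordered (a1, a2) (c1, c2)"
proof -
  note t1 = traj3[OF T(1) T(2)] and t2 = traj3[OF T(1) T(3)]
  have good: "(x1, x2) \<in> F2 S \<and> dt u (x1 - x2) \<ge> 1"
    if x1: "x1 \<in> closed_segment a1 b1 \<union> closed_segment b1 c1"
    and x2: "x2 \<in> closed_segment a2 b2 \<union> closed_segment b2 c2" for x1 x2
  proof -
    have "dt u x1 \<ge> dt u a1" using M1 x1 by blast
    moreover have "dt u x2 \<le> dt u a2" using M2 x2 by blast
    ultimately have "dt u (x1 - x2) \<ge> 1" using sep by (simp add: dt_diff)
    moreover have "x1 \<in> inner S" "x2 \<in> inner S" using x1 x2 I1 I2 by auto
    ultimately show ?thesis using axis_props(4)[OF ax, of "x1 - x2"] F2_iff[of x1 x2 S] by simp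
  qed
  show "feasible_schedule S T (\<lambda>t. polyline [a1,b1,c1] (t / T)) (\<lambda>t. polyline [a2,b2,c2] (t / T))"
    unfolding feasible_schedule_def
  proof (intro conjI ballI)
    show "trajectory T (\<lambda>t. polyline [a1,b1,c1] (t / T))" using t1(1) .
    show "trajectory T (\<lambda>t. polyline [a2,b2,c2] (t / T))" using t2(1) .
    fix t assume t: "t \<in> {0..T}"
    have "polyline [a1,b1,c1] (t / T) \<in> (\<lambda>t. polyline [a1,b1,c1] (t / T)) ` {0..T}"
      by (rule imageI[OF t])
    then have m1: "polyline [a1,b1,c1] (t / T) \<in> closed_segment a1 b1 \<union> closed_segment b1 c1"
      unfolding t1(2) .
    have "polyline [a2,b2,c2] (t / T) \<in> (\<lambda>t. polyline [a2,b2,c2] (t / T)) ` {0..T}"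
      by (rule imageI[OF t])
    then have m2: "polyline [a2,b2,c2] (t / T) \<in> closed_segment a2 b2 \<union> closed_segment b2 c2"
      unfolding t2(2) .
    have "(polyline [a1,b1,c1] (t / T), polyline [a2,b2,c2] (t / T)) \<in> F2 S \<and>
      dt u (polyline [a1,b1,c1] (t / T) - polyline [a2,b2,c2] (t / T)) \<ge> 1" by (rule good[OF m1 m2])
    then show "(polyline [a1,b1,c1] (t / T), polyline [a2,b2,c2] (t / T)) \<in> F2 S" by (rule conjunct1)
  qed
  show "((\<lambda>t. polyline [a1,b1,c1] (t / T)) 0, (\<lambda>t. polyline [a2,b2,c2] (t / T)) 0) = (a1, a2)"
    using t1(3) t2(3) by (simp only:)
  show "((\<lambda>t. polyline [a1,b1,c1] (t / T)) T, (\<lambda>t. polyline [a2,b2,c2] (t / T)) T) = (c1, c2)"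
    using t1(4) t2(4) by (simp only:)
  have c1i: "c1 \<in> closed_segment a1 b1 \<union> closed_segment b1 c1" using ends_in_segment(2)[where a=b1 and b=c1] by (rule UnI2)
  have c2i: "c2 \<in> closed_segment a2 b2 \<union> closed_segment b2 c2" using ends_in_segment(2)[where a=b2 and b=c2] by (rule UnI2)
  have cc: "(c1, c2) \<in> F2 S \<and> dt u (c1 - c2) \<ge> 1" by (rule good[OF c1i c2i])
  then show "(c1, c2) \<in> F2 S" by (rule conjunct1)
  have o1: "(c1, c2) \<in> {(q1, q2). dt u (q1 - q2) \<ge> 1}" using conjunct2[OF cc] by simp
  have o2: "(a1, a2) \<in> {(q1, q2). dt u (q1 - q2) \<ge> 1}" using sep by simp
  show "commonly_ordered (a1, a2) (c1, c2)" unfolding commonly_ordered_def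
  proof (rule bexI[where x="{(q1, q2). dt u (q1 - q2) \<ge> 1}"])
    show "(a1, a2) \<in> {(q1, q2). dt u (q1 - q2) \<ge> 1} \<and> (c1, c2) \<in> {(q1, q2). dt u (q1 - q2) \<ge> 1}"
      using o1 o2 by (rule conjI[rotated])
    show "{(q1, q2). dt u (q1 - q2) \<ge> 1} \<in> orderings" by (rule axis_props(3)[OF ax])
  qed
qed

lemma norm_intro:
  "feasible_schedule S T m1 m2 \<Longrightarrow> (m1 0, m2 0) = P \<Longrightarrow> (m1 T, m2 T) = Q \<Longrightarrow> C Q \<Longrightarrow>
   commonly_ordered P Q \<Longrightarrow> normalizes S C P T m1 m2"
  unfolding normalizes_def by simp

theorem lemma7p1:
  assumes "polygonal_domain S" and "P \<in> F2 S"
  shows "(\<exists>T m1 m2. normalizes S (boundary_config S) P T m1 m2 \<and>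
                    turns T m1 = {} \<and> turns T m2 = {}) \<and>
         (\<exists>T m1 m2. normalizes S (corner_config S) P T m1 m2 \<and>
                    (\<forall>x\<in>turns T m1. \<forall>y\<in>turns T m1. x = y) \<and>
                    (\<forall>x\<in>turns T m2. \<forall>y\<in>turns T m2. x = y))"
proof -
  define A where "A = inner S"
  have clS: "closed S" and bS: "bounded S" using pd_closed_bounded[OF assms(1)] by auto
  have cA: "compact A" unfolding A_def
    using inner_closed[OF clS] bounded_subset[OF bS inner_sub] by (simp add: compact_eq_bounded_closed)
  obtain p1 p2 where P: "P = (p1, p2)" by (cases P)
  have p1A: "p1 \<in> A" and p2A: "p2 \<in> A" and sepP: "linf (p1 - p2) \<ge> 1"
    using assms(2) unfolding P A_def F2_iff by auto
  obtain u where ax: "axis u" and sep: "dt u (p1 - p2) \<ge> 1" using axis_exists[OF sepP] by blast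
  have u0: "u \<noteq> 0" and uu: "dt u u = 1" using axis_props[OF ax] by auto
  have mu0: "- u \<noteq> 0" using u0 by simp
  obtain t1 where t1: "t1 \<ge> 0" "\<forall>s\<in>{0..t1}. p1 + s *\<^sub>R u \<in> A" "p1 + t1 *\<^sub>R u \<in> frontier A"
    using ray_exit[OF cA p1A u0] by blast
  obtain t2 where t2: "t2 \<ge> 0" "\<forall>s\<in>{0..t2}. p2 + s *\<^sub>R (- u) \<in> A" "p2 + t2 *\<^sub>R (- u) \<in> frontier A"
    using ray_exit[OF cA p2A mu0] by blast
  define h1 where "h1 = p1 + t1 *\<^sub>R u"
  define h2 where "h2 = p2 + t2 *\<^sub>R (- u)"
  have s1: "closed_segment p1 h1 \<subseteq> A" "\<forall>x\<in>closed_segment p1 h1. dt u x \<ge> dt u p1"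
  proof -
    have "0 \<le> dt u u" using uu by simp
    then show "closed_segment p1 h1 \<subseteq> A" "\<forall>x\<in>closed_segment p1 h1. dt u x \<ge> dt u p1"
      using ray_seg[OF t1(2) t1(1)] unfolding h1_def by auto
  qed
  have s2: "closed_segment p2 h2 \<subseteq> A" "\<forall>x\<in>closed_segment p2 h2. dt (- u) x \<ge> dt (- u) p2"
  proof -
    have "0 \<le> dt (- u) (- u)" using uu unfolding dt_def by simp
    then show "closed_segment p2 h2 \<subseteq> A" "\<forall>x\<in>closed_segment p2 h2. dt (- u) x \<ge> dt (- u) p2"
      using ray_seg[OF t2(2) t2(1)] unfolding h2_def by auto
  qed
  have s2': "\<forall>x\<in>closed_segment p2 h2. dt u x \<le> dt u p2" using s2(2) dt_neg by fastforce
  have h1f: "h1 \<in> frontier A" and h2f: "h2 \<in> frontier A" using t1(3) t2(3) h1_def h2_def by auto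
  have frA: "frontier A \<subseteq> A" using cA compact_imp_closed frontier_subset_closed by blast
  have part1: "\<exists>T m1 m2. normalizes S (boundary_config S) P T m1 m2 \<and> turns T m1 = {} \<and> turns T m2 = {}"
  proof -
    define T where "T = 2 * (lone (h1 - p1) + lone (h1 - h1)) + 2 * (lone (h2 - p2) + lone (h2 - h2)) + 1"
    have lo: "0 \<le> lone x" for x unfolding lone_def by simp
    have l4: "0 \<le> lone (h1 - p1)" "0 \<le> lone (h2 - p2)" "0 \<le> lone (h1 - h1)" "0 \<le> lone (h2 - h2)" using lo by auto
    have T: "T > 0" "2 * (lone (h1 - p1) + lone (h1 - h1)) \<le> T" "2 * (lone (h2 - p2) + lone (h2 - h2)) \<le> T"
      unfolding T_def using l4 by simp_all
    have I1: "closed_segment p1 h1 \<union> closed_segment h1 h1 = closed_segment p1 h1" by auto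
    have I2: "closed_segment p2 h2 \<union> closed_segment h2 h2 = closed_segment p2 h2" by auto
    note sc = sched[OF T, unfolded I1 I2, OF s1(1)[unfolded A_def] s2(1)[unfolded A_def] s1(2) s2' sep ax]
    have sc1: "feasible_schedule S T (\<lambda>t. polyline [p1,h1,h1] (t / T)) (\<lambda>t. polyline [p2,h2,h2] (t / T))"
      "((\<lambda>t. polyline [p1,h1,h1] (t / T)) 0, (\<lambda>t. polyline [p2,h2,h2] (t / T)) 0) = (p1, p2)"
      "((\<lambda>t. polyline [p1,h1,h1] (t / T)) T, (\<lambda>t. polyline [p2,h2,h2] (t / T)) T) = (h1, h2)"
      "(h1, h2) \<in> F2 S" "commonly_ordered (p1, p2) (h1, h2)"
      using sc by auto
    have bc: "boundary_config S (h1, h2)" unfolding boundary_config_def using sc1(4) h1f h2f A_def by simp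
    have tu1: "turns T (\<lambda>t. polyline [p1,h1,h1] (t / T)) = {}"
      using turns_one[OF traj3(2)[OF T(1) T(2), unfolded I1]] .
    have tu2: "turns T (\<lambda>t. polyline [p2,h2,h2] (t / T)) = {}"
      using turns_one[OF traj3(2)[OF T(1) T(3), unfolded I2]] .
    have N: "normalizes S (boundary_config S) P T (\<lambda>t. polyline [p1,h1,h1] (t / T)) (\<lambda>t. polyline [p2,h2,h2] (t / T))"
      unfolding P by (rule norm_intro, fact sc1(1), fact sc1(2), fact sc1(3), fact bc, fact sc1(5))
    show ?thesis by (intro exI conjI, rule N, rule tu1, rule tu2)
  qed
  obtain d1 r1 where v1: "0 \<le> r1" "\<forall>s\<in>{0..r1}. h1 + s *\<^sub>R d1 \<in> A" "is_vertex A (h1 + r1 *\<^sub>R d1)" "dt u d1 \<ge> 0"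
    using vstep[OF cA h1f, of u] by blast
  obtain d2 r2 where v2: "0 \<le> r2" "\<forall>s\<in>{0..r2}. h2 + s *\<^sub>R d2 \<in> A" "is_vertex A (h2 + r2 *\<^sub>R d2)" "dt (- u) d2 \<ge> 0"
    using vstep[OF cA h2f, of "- u"] by blast
  define c1 where "c1 = h1 + r1 *\<^sub>R d1"
  define c2 where "c2 = h2 + r2 *\<^sub>R d2"
  have q1: "closed_segment h1 c1 \<subseteq> A" "\<forall>x\<in>closed_segment h1 c1. dt u x \<ge> dt u h1"
    using ray_seg[OF v1(2) v1(1) v1(4)] unfolding c1_def by auto
  have q2: "closed_segment h2 c2 \<subseteq> A" "\<forall>x\<in>closed_segment h2 c2. dt (- u) x \<ge> dt (- u) h2"
    using ray_seg[OF v2(2) v2(1) v2(4)] unfolding c2_def by auto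
  have q2': "\<forall>x\<in>closed_segment h2 c2. dt u x \<le> dt u h2" using q2(2) dt_neg by fastforce
  have h1p: "dt u h1 \<ge> dt u p1" using s1(2) by auto
  have h2p: "dt u h2 \<le> dt u p2" using s2' by auto
  have part2: "\<exists>T m1 m2. normalizes S (corner_config S) P T m1 m2 \<and>
                    (\<forall>x\<in>turns T m1. \<forall>y\<in>turns T m1. x = y) \<and>
                    (\<forall>x\<in>turns T m2. \<forall>y\<in>turns T m2. x = y)"
  proof -
    define T where "T = 2 * (lone (h1 - p1) + lone (c1 - h1)) + 2 * (lone (h2 - p2) + lone (c2 - h2)) + 1"
    have lo: "0 \<le> lone x" for x unfolding lone_def by simp
    have l4: "0 \<le> lone (h1 - p1)" "0 \<le> lone (h2 - p2)" "0 \<le> lone (c1 - h1)" "0 \<le> lone (c2 - h2)" using lo by auto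
    have T: "T > 0" "2 * (lone (h1 - p1) + lone (c1 - h1)) \<le> T" "2 * (lone (h2 - p2) + lone (c2 - h2)) \<le> T"
      unfolding T_def using l4 by simp_all
    have M1: "\<forall>x\<in>closed_segment p1 h1 \<union> closed_segment h1 c1. dt u x \<ge> dt u p1"
    proof
      fix x assume "x \<in> closed_segment p1 h1 \<union> closed_segment h1 c1"
      then consider "x \<in> closed_segment p1 h1" | "x \<in> closed_segment h1 c1" by blast
      then show "dt u x \<ge> dt u p1"
      proof cases
        case 1 then show ?thesis using s1(2) by blast
      next
        case 2 then have "dt u h1 \<le> dt u x" using q1(2) by blast
        then show ?thesis using h1p by linarith
      qed
    qed
    have M2: "\<forall>x\<in>closed_segment p2 h2 \<union> closed_segment h2 c2. dt u x \<le> dt u p2"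
    proof
      fix x assume "x \<in> closed_segment p2 h2 \<union> closed_segment h2 c2"
      then consider "x \<in> closed_segment p2 h2" | "x \<in> closed_segment h2 c2" by blast
      then show "dt u x \<le> dt u p2"
      proof cases
        case 1 then show ?thesis using s2' by blast
      next
        case 2 then have "dt u x \<le> dt u h2" using q2' by blast
        then show ?thesis using h2p by linarith
      qed
    qed
    have sc1: "feasible_schedule S T (\<lambda>t. polyline [p1,h1,c1] (t / T)) (\<lambda>t. polyline [p2,h2,c2] (t / T))"
      "((\<lambda>t. polyline [p1,h1,c1] (t / T)) 0, (\<lambda>t. polyline [p2,h2,c2] (t / T)) 0) = (p1, p2)"
      "((\<lambda>t. polyline [p1,h1,c1] (t / T)) T, (\<lambda>t. polyline [p2,h2,c2] (t / T)) T) = (c1, c2)"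
      "(c1, c2) \<in> F2 S" "commonly_ordered (p1, p2) (c1, c2)"
    proof -
      have I1: "closed_segment p1 h1 \<union> closed_segment h1 c1 \<subseteq> inner S" using s1(1) q1(1) A_def by auto
      have I2: "closed_segment p2 h2 \<union> closed_segment h2 c2 \<subseteq> inner S" using s2(1) q2(1) A_def by auto
      show "feasible_schedule S T (\<lambda>t. polyline [p1,h1,c1] (t / T)) (\<lambda>t. polyline [p2,h2,c2] (t / T))"
      "((\<lambda>t. polyline [p1,h1,c1] (t / T)) 0, (\<lambda>t. polyline [p2,h2,c2] (t / T)) 0) = (p1, p2)"
      "((\<lambda>t. polyline [p1,h1,c1] (t / T)) T, (\<lambda>t. polyline [p2,h2,c2] (t / T)) T) = (c1, c2)"
      "(c1, c2) \<in> F2 S" "commonly_ordered (p1, p2) (c1, c2)"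
        using sched[OF T I1 I2 M1 M2 sep ax] by -
    qed
    have bc: "corner_config S (c1, c2)" unfolding corner_config_def using sc1(4) v1(3) v2(3) A_def c1_def c2_def by simp
    have "turns T (\<lambda>t. polyline [p1,h1,c1] (t / T)) \<subseteq> {h1}"
      using turns_two[OF traj3(2)[OF T(1) T(2)]] .
    then have tu1: "\<forall>x\<in>turns T (\<lambda>t. polyline [p1,h1,c1] (t / T)). \<forall>y\<in>turns T (\<lambda>t. polyline [p1,h1,c1] (t / T)). x = y"
      by blast
    have "turns T (\<lambda>t. polyline [p2,h2,c2] (t / T)) \<subseteq> {h2}"
      using turns_two[OF traj3(2)[OF T(1) T(3)]] .
    then have tu2: "\<forall>x\<in>turns T (\<lambda>t. polyline [p2,h2,c2] (t / T)). \<forall>y\<in>turns T (\<lambda>t. polyline [p2,h2,c2] (t / T)). x = y"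
      by blast
    have N: "normalizes S (corner_config S) P T (\<lambda>t. polyline [p1,h1,c1] (t / T)) (\<lambda>t. polyline [p2,h2,c2] (t / T))"
      unfolding P by (rule norm_intro, fact sc1(1), fact sc1(2), fact sc1(3), fact bc, fact sc1(5))
    show ?thesis by (intro exI conjI, rule N, rule tu1, rule tu2)
  qed
  show ?thesis using part1 part2 by blast
qed

end
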